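(* Let $s>0$ and let $\mathcal{G}=\{g_x\}_{x\in\mathbb{Z}}$ be an $\mathcal{A}^1_s$-self-localized frame for the separable Hilbert space $\mathcal{H}$ with canonical dual frame $\tilde{\mathcal{G}}=\{\tilde g_x\}_{x\in\mathbb{Z}}$. Let $\mathcal{F}=\{f_n\}_{n\in\mathbb{Z}}$ be a frame for $\mathcal{H}$ with frame bounds $A,B$, and let $\mathcal{E}=\{e_n\}_{n\in\mathbb{Z}}\subset\mathcal{H}$ satisfy $$\|A(\mathcal{E}-\mathcal{F},\tilde{\mathcal{G}})\|_{\mathcal{A}^1}=\max\Big\{\sup_{n\in\mathbb{Z}}\sum_{x\in\mathbb{Z}}|\langle e_n-f_n,\tilde g_x\rangle|,\ \sup_{x\in\mathbb{Z}}\sum_{n\in\mathbb{Z}}|\langle e_n-f_n,\tilde g_x\rangle|\Big\}\le\varepsilon$$ with $0<\varepsilon<\left(\sqrt{A^{-1}\|A(\mathcal{G},\mathcal{G})\|_{\mathcal{A}^1}}\right)^{-1}$. Then $\mathcal{E}$ is a frame for $\mathcal{H}$ with lower frame bound $A\left(1-\sqrt{A^{-1}\|A(\mathcal{G},\mathcal{G})\|_{\mathcal{A}^1}}\,\varepsilon\right)^2$ and upper frame bound $B\left(1+\sqrt{B^{-1}\|A(\mathcal{G},\mathcal{G})\|_{\mathcal{A}^1}}\,\varepsilon\right)^2$.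
   Context: A sequence $\{h_n\}_{n\in\mathbb{Z}}$ in a separable Hilbert space $\mathcal{H}$ is a frame with bounds $0<A\le B<\infty$ if $A\|f\|^2\le\sum_n|\langle f,h_n\rangle|^2\le B\|f\|^2$ for all $f\in\mathcal{H}$; its frame operator $Sf=\sum_n\langle f,h_n\rangle h_n$ is boundedly invertible and $\{S^{-1}h_n\}$ is the canonical dual frame. For $s\ge0$, $v_s(x)=(1+|x|)^s$, and the Schur algebra $\mathcal{A}^1_s$ is the set of matrices $M=(m_{kl})_{k,l\in\mathbb{Z}}$ with $\|M\|_{\mathcal{A}^1_s}:=\max\{\sup_k\sum_l|m_{kl}|v_s(k-l),\ \sup_l\sum_k|m_{kl}|v_s(k-l)\}<\infty$; $\mathcal{A}^1:=\mathcal{A}^1_0$. For sequences $\mathcal{G}=\{g_n\}$, $\mathcal{F}=\{f_x\}$ the Gramian $A(\mathcal{G},\mathcal{F})$ is the matrix with entries $\langle g_n,f_x\rangle$; $A(\mathcal{E}-\mathcal{F},\tilde{\mathcal{G}})$ denotes the matrix with entries $\langle e_n-f_n,\tilde g_x\rangle$. A frame $\mathcal{G}$ is $\mathcal{A}^1_s$-self-localized if $A(\mathcal{G},\mathcal{G})\in\mathcal{A}^1_s$. *)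

theory Defs
  imports "HOL-Analysis.Analysis"
begin

text \<open>HOL-Analysis only provides real inner product spaces,
  so we introduce a class of complex Hilbert spaces: a (real) Banach space equipped
  with a complex scalar multiplication compatible with the real one and a complex
  inner product (linear in the first, conjugate linear in the second argument)
  inducing the norm.\<close>

class complex_hilbert = banach +
  fixes scaleC :: "complex \<Rightarrow> 'a \<Rightarrow> 'a"
    and cinner :: "'a \<Rightarrow> 'a \<Rightarrow> complex"
  assumes scaleC_add_right: "scaleC a (x + y) = scaleC a x + scaleC a y"
    and scaleC_add_left: "scaleC (a + b) x = scaleC a x + scaleC b x"
    and scaleC_scaleC: "scaleC a (scaleC b x) = scaleC (a * b) x"
    and scaleC_one: "scaleC 1 x = x"
    and scaleR_scaleC: "scaleR r x = scaleC (complex_of_real r) x"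
    and cinner_commute: "cinner x y = cnj (cinner y x)"
    and cinner_add_left: "cinner (x + y) z = cinner x z + cinner y z"
    and cinner_scaleC_left: "cinner (scaleC a x) y = a * cinner x y"
    and cinner_self_real: "Im (cinner x x) = 0"
    and cinner_self_nonneg: "0 \<le> Re (cinner x x)"
    and cinner_self_eq_0: "cinner x x = 0 \<longleftrightarrow> x = 0"
    and norm_eq_sqrt_cinner: "norm x = sqrt (Re (cinner x x))"

definition frame_bounds :: "(int \<Rightarrow> 'a::complex_hilbert) \<Rightarrow> real \<Rightarrow> real \<Rightarrow> bool" where
  "frame_bounds h A B \<longleftrightarrow> 0 < A \<and> A \<le> B \<and>
     (\<forall>f. (\<lambda>n. (cmod (cinner f (h n)))\<^sup>2) summable_on UNIV \<and>
          A * (norm f)\<^sup>2 \<le> (\<Sum>\<^sub>\<infinity>n. (cmod (cinner f (h n)))\<^sup>2) \<and>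
          (\<Sum>\<^sub>\<infinity>n. (cmod (cinner f (h n)))\<^sup>2) \<le> B * (norm f)\<^sup>2)"

definition is_frame :: "(int \<Rightarrow> 'a::complex_hilbert) \<Rightarrow> bool" where
  "is_frame h \<longleftrightarrow> (\<exists>A B. frame_bounds h A B)"

definition frame_op :: "(int \<Rightarrow> 'a::complex_hilbert) \<Rightarrow> 'a \<Rightarrow> 'a" where
  "frame_op h f = (\<Sum>\<^sub>\<infinity>n. scaleC (cinner f (h n)) (h n))"

definition canonical_dual :: "(int \<Rightarrow> 'a::complex_hilbert) \<Rightarrow> int \<Rightarrow> 'a" where
  "canonical_dual h x = inv (frame_op h) (h x)"

definition vweight :: "real \<Rightarrow> int \<Rightarrow> real" where
  "vweight s x = (1 + \<bar>real_of_int x\<bar>) powr s"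

definition schur_norm :: "real \<Rightarrow> (int \<Rightarrow> int \<Rightarrow> complex) \<Rightarrow> ennreal" where
  "schur_norm s M = max
     (SUP k. \<Sum>\<^sub>\<infinity>l. ennreal (cmod (M k l) * vweight s (k - l)))
     (SUP l. \<Sum>\<^sub>\<infinity>k. ennreal (cmod (M k l) * vweight s (k - l)))"

definition in_schur :: "real \<Rightarrow> (int \<Rightarrow> int \<Rightarrow> complex) \<Rightarrow> bool" where
  "in_schur s M \<longleftrightarrow> schur_norm s M < \<infinity>"

definition gramian :: "(int \<Rightarrow> 'a::complex_hilbert) \<Rightarrow> (int \<Rightarrow> 'a) \<Rightarrow> int \<Rightarrow> int \<Rightarrow> complex" where
  "gramian g f n x = cinner (g n) (f x)"

definition self_localized :: "real \<Rightarrow> (int \<Rightarrow> 'a::complex_hilbert) \<Rightarrow> bool" where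
  "self_localized s g \<longleftrightarrow> in_schur s (gramian g g)"

end

theory Submission
  imports Defs
begin

lemma cinner_zero_left[simp]: "cinner (0::'a::complex_hilbert) y = 0"
proof -
  have "cinner (0::'a) y = cinner (0 + 0) y" by simp
  also have "\<dots> = cinner 0 y + cinner 0 y" by (rule cinner_add_left)
  finally show ?thesis by simp
qed

lemma cinner_minus_left: "cinner (- x::'a::complex_hilbert) y = - cinner x y"
proof -
  have "cinner (x + - x) y = cinner x y + cinner (-x) y" by (rule cinner_add_left)
  then have "cinner (-x) y + cinner x y = 0" by (simp add: add.commute)
  then show ?thesis by (metis eq_neg_iff_add_eq_0)
qed

lemma cinner_diff_left: "cinner (x - z::'a::complex_hilbert) y = cinner x y - cinner z y"
  unfolding diff_conv_add_uminus cinner_add_left cinner_minus_left by simp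

lemma cinner_add_right: "cinner (x::'a::complex_hilbert) (y + z) = cinner x y + cinner x z"
  by (metis cinner_commute cinner_add_left complex_cnj_add)

lemma cinner_diff_right: "cinner (x::'a::complex_hilbert) (y - z) = cinner x y - cinner x z"
  by (metis cinner_commute cinner_diff_left complex_cnj_diff)

lemma cinner_zero_right[simp]: "cinner (x::'a::complex_hilbert) 0 = 0"
  by (metis cinner_commute cinner_zero_left complex_cnj_zero)

lemma cinner_scaleC_right: "cinner (x::'a::complex_hilbert) (scaleC a y) = cnj a * cinner x y"
  by (metis cinner_commute cinner_scaleC_left complex_cnj_mult)

lemma cinner_scaleR_left: "cinner (scaleR r x::'a::complex_hilbert) y = of_real r * cinner x y"
  by (simp add: scaleR_scaleC cinner_scaleC_left)

lemma cinner_scaleR_right: "cinner (x::'a::complex_hilbert) (scaleR r y) = of_real r * cinner x y"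
  by (simp add: scaleR_scaleC cinner_scaleC_right)

lemma cinner_sum_left: "cinner (\<Sum>i\<in>I. f i::'a::complex_hilbert) y = (\<Sum>i\<in>I. cinner (f i) y)"
  by (induction I rule: infinite_finite_induct) (auto simp: cinner_add_left)

lemma cinner_sum_right: "cinner (y::'a::complex_hilbert) (\<Sum>i\<in>I. f i) = (\<Sum>i\<in>I. cinner y (f i))"
  by (induction I rule: infinite_finite_induct) (auto simp: cinner_add_right)

lemma cinner_self: "cinner (x::'a::complex_hilbert) x = of_real ((norm x)\<^sup>2)"
proof -
  have "(norm x)\<^sup>2 = Re (cinner x x)" using norm_eq_sqrt_cinner[of x] cinner_self_nonneg[of x] by simp
  then show ?thesis using cinner_self_real[of x] by (simp add: complex_eq_iff)
qed

lemma Re_cinner_self: "Re (cinner (x::'a::complex_hilbert) x) = (norm x)\<^sup>2"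
  by (simp add: cinner_self)

lemma scaleC_zero_left[simp]: "scaleC 0 (x::'a::complex_hilbert) = 0"
  by (metis of_real_0 scaleR_scaleC scaleR_zero_left)

lemma scaleC_zero_right[simp]: "scaleC a (0::'a::complex_hilbert) = 0"
  by (metis add_cancel_right_right scaleC_add_right add_0)

lemma quad_lemma:
  fixes a b c :: real
  assumes "\<And>r. 0 \<le> a - 2 * r * b + r\<^sup>2 * c" "0 \<le> c"
  shows "b\<^sup>2 \<le> a * c"
proof (cases "c = 0")
  case True
  have "b = 0"
  proof (rule ccontr)
    assume "b \<noteq> 0"
    have "0 \<le> a - 2 * ((a + 1) / (2*b)) * b" using assms(1)[of "(a+1)/(2*b)"] True by simp
    also have "\<dots> = -1" using \<open>b \<noteq> 0\<close> by (simp add: field_simps)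
    finally show False by simp
  qed
  then show ?thesis using True by simp
next
  case False
  then have "c > 0" using assms(2) by simp
  have "0 \<le> a - 2 * (b/c) * b + (b/c)\<^sup>2 * c" by (rule assms(1))
  also have "\<dots> = (a*c - b\<^sup>2)/c" using \<open>c>0\<close> by (simp add: field_simps power2_eq_square)
  finally show ?thesis using \<open>c>0\<close> by (simp add: divide_nonneg_pos zero_le_divide_iff)
qed

lemma cinner_expand: "cinner (x - scaleC s y) (x - scaleC s (y::'a::complex_hilbert)) =
   cinner x x - cnj s * cinner x y - s * cinner y x + s * cnj s * cinner y y"
  by (simp add: cinner_diff_left cinner_diff_right cinner_scaleC_left cinner_scaleC_right algebra_simps)

lemma cauchy_schwarz: "cmod (cinner (x::'a::complex_hilbert) y) \<le> norm x * norm y"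
proof -
  define \<alpha> where "\<alpha> = cinner x y"
  define b where "b = (cmod \<alpha>)^2"
  have ab: "\<alpha> * cnj \<alpha> = of_real b" "cnj \<alpha> * \<alpha> = of_real b"
    using complex_norm_square[of \<alpha>] by (auto simp: b_def mult.commute)
  have "b^2 \<le> (norm x)^2 * (b * (norm y)^2)"
  proof (rule quad_lemma)
    fix r :: real
    have "0 \<le> Re (cinner (x - scaleC (of_real r * \<alpha>) y) (x - scaleC (of_real r * \<alpha>) y))"
      by (rule cinner_self_nonneg)
    also have "\<dots> = (norm x)^2 - 2 * r * b + r^2 * (b * (norm y)^2)"
    proof -
      have e1: "cinner y x = cnj \<alpha>" by (simp add: \<alpha>_def cinner_commute[of y x])
      have "cinner (x - scaleC (of_real r * \<alpha>) y) (x - scaleC (of_real r * \<alpha>) y)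
         = of_real ((norm x)^2) - of_real r * (cnj \<alpha> * \<alpha>) - of_real r * (\<alpha> * cnj \<alpha>) + of_real r * of_real r * (\<alpha> * cnj \<alpha>) * of_real ((norm y)^2)"
        by (simp only: cinner_expand e1 cinner_self[of x] cinner_self[of y] \<alpha>_def[symmetric]) (simp add: algebra_simps)
      also have "\<dots> = of_real ((norm x)^2 - 2 * r * b + r^2 * (b * (norm y)^2))"
        unfolding ab by (simp add: algebra_simps power2_eq_square)
      finally show ?thesis by simp
    qed
    finally show "0 \<le> (norm x)^2 - 2 * r * b + r^2 * (b * (norm y)^2)" .
  qed (simp add: b_def)
  then have "b \<le> (norm x)^2 * (norm y)^2 \<or> b = 0"
    by (cases "b = 0") (auto simp: power2_eq_square b_def mult_le_cancel_left_pos)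
  then have "b \<le> (norm x * norm y)^2" by (auto simp: power_mult_distrib)
  then show ?thesis unfolding \<alpha>_def b_def by (meson norm_ge_zero power2_le_imp_le mult_nonneg_nonneg)
qed

lemma norm_scaleC: "norm (scaleC a (x::'a::complex_hilbert)) = cmod a * norm x"
proof -
  have "(norm (scaleC a x))^2 = Re (cinner (scaleC a x) (scaleC a x))" by (simp add: Re_cinner_self)
  also have "\<dots> = Re (a * cnj a * of_real ((norm x)^2))"
    by (simp only: cinner_scaleC_left cinner_scaleC_right cinner_self[of x]) (simp only: mult_ac)
  also have "\<dots> = Re (of_real ((cmod a)^2 * (norm x)^2))" by (simp only: complex_norm_square of_real_mult)
  also have "\<dots> = (cmod a * norm x)^2" by (simp add: power_mult_distrib)
  finally show ?thesis by (simp add: power2_eq_iff_nonneg)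
qed

lemma gram_bound:
  fixes g :: "int \<Rightarrow> 'a::complex_hilbert"
  assumes row: "\<And>x F. finite F \<Longrightarrow> (\<Sum>y\<in>F. cmod (cinner (g x) (g y))) \<le> K"
    and col: "\<And>y F. finite F \<Longrightarrow> (\<Sum>x\<in>F. cmod (cinner (g x) (g y))) \<le> K"
    and F: "finite F"
  shows "(norm (\<Sum>x\<in>F. scaleC (c x) (g x)))^2 \<le> K * (\<Sum>x\<in>F. (cmod (c x))^2)"
proof -
  define G where "G x y = cmod (cinner (g x) (g y))" for x y
  have "(norm (\<Sum>x\<in>F. scaleC (c x) (g x)))^2 = Re (cinner (\<Sum>x\<in>F. scaleC (c x) (g x)) (\<Sum>y\<in>F. scaleC (c y) (g y)))"
    by (simp add: Re_cinner_self)
  also have "\<dots> = Re (\<Sum>x\<in>F. \<Sum>y\<in>F. c x * cnj (c y) * cinner (g x) (g y))"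
  proof -
    have "cinner (\<Sum>x\<in>F. scaleC (c x) (g x)) (\<Sum>y\<in>F. scaleC (c y) (g y)) = (\<Sum>x\<in>F. \<Sum>y\<in>F. c x * cnj (c y) * cinner (g x) (g y))"
      unfolding cinner_sum_left by (simp add: cinner_sum_right cinner_scaleC_left cinner_scaleC_right sum_distrib_left mult.assoc mult.left_commute)
    then show ?thesis by (rule arg_cong)
  qed
  also have "\<dots> \<le> cmod (\<Sum>x\<in>F. \<Sum>y\<in>F. c x * cnj (c y) * cinner (g x) (g y))" by (rule complex_Re_le_cmod)
  also have "\<dots> \<le> (\<Sum>x\<in>F. \<Sum>y\<in>F. cmod (c x) * cmod (c y) * G x y)"
    unfolding G_def
    by (rule order.trans[OF norm_sum sum_mono], rule order.trans[OF norm_sum], simp add: norm_mult)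
  also have "\<dots> \<le> (\<Sum>x\<in>F. \<Sum>y\<in>F. ((cmod (c x))^2/2 + (cmod (c y))^2/2) * G x y)"
  proof (intro sum_mono mult_right_mono)
    fix x y
    show "cmod (c x) * cmod (c y) \<le> (cmod (c x))\<^sup>2 / 2 + (cmod (c y))\<^sup>2 / 2"
      using sum_squares_bound[of "cmod (c x)" "cmod (c y)"] by (simp add: power2_eq_square)
  qed (simp add: G_def)
  also have "\<dots> = (\<Sum>x\<in>F. (cmod (c x))^2/2 * (\<Sum>y\<in>F. G x y)) + (\<Sum>y\<in>F. (cmod (c y))^2/2 * (\<Sum>x\<in>F. G x y))"
  proof -
    have "(\<Sum>x\<in>F. \<Sum>y\<in>F. ((cmod (c x))^2/2 + (cmod (c y))^2/2) * G x y)
       = (\<Sum>x\<in>F. \<Sum>y\<in>F. (cmod (c x))^2/2 * G x y) + (\<Sum>x\<in>F. \<Sum>y\<in>F. (cmod (c y))^2/2 * G x y)"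
      by (simp only: distrib_right sum.distrib)
    also have "(\<Sum>x\<in>F. \<Sum>y\<in>F. (cmod (c y))^2/2 * G x y) = (\<Sum>y\<in>F. \<Sum>x\<in>F. (cmod (c y))^2/2 * G x y)"
      by (rule sum.swap)
    finally show ?thesis by (simp only: sum_distrib_left)
  qed
  also have "\<dots> \<le> (\<Sum>x\<in>F. (cmod (c x))^2/2 * K) + (\<Sum>y\<in>F. (cmod (c y))^2/2 * K)"
    by (intro add_mono sum_mono mult_left_mono) (auto simp: G_def row col F)
  also have "\<dots> = K * (\<Sum>x\<in>F. (cmod (c x))^2)"
    by (simp add: sum_distrib_left sum_distrib_right field_simps flip: sum_divide_distrib)
  finally show ?thesis .
qed

lemma bessel_bound:
  fixes g :: "int \<Rightarrow> 'a::complex_hilbert"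
  assumes row: "\<And>x F. finite F \<Longrightarrow> (\<Sum>y\<in>F. cmod (cinner (g x) (g y))) \<le> K"
    and col: "\<And>y F. finite F \<Longrightarrow> (\<Sum>x\<in>F. cmod (cinner (g x) (g y))) \<le> K"
    and F: "finite F" and K: "0 \<le> K"
  shows "(\<Sum>x\<in>F. (cmod (cinner h (g x)))^2) \<le> K * (norm h)^2"
proof -
  define c where "c x = cinner h (g x)" for x
  define S where "S = (\<Sum>x\<in>F. (cmod (c x))^2)"
  define u where "u = (\<Sum>x\<in>F. scaleC (c x) (g x))"
  have "cinner h u = (\<Sum>x\<in>F. cnj (c x) * c x)"
    by (simp add: u_def cinner_sum_right cinner_scaleC_right c_def)
  also have "\<dots> = (\<Sum>x\<in>F. of_real ((cmod (c x))^2))"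
    by (rule sum.cong) (simp_all only: complex_norm_square mult.commute)
  also have "\<dots> = of_real S" by (simp only: S_def of_real_sum)
  finally have "S = Re (cinner h u)" by simp
  also have "\<dots> \<le> cmod (cinner h u)" by (rule complex_Re_le_cmod)
  also have "\<dots> \<le> norm h * norm u" by (rule cauchy_schwarz)
  finally have S1: "S \<le> norm h * norm u" .
  have S0: "0 \<le> S" by (simp add: S_def sum_nonneg)
  have "(norm u)^2 \<le> K * S" unfolding u_def S_def by (rule gram_bound[OF row col F])
  have "S^2 \<le> (norm h)^2 * (norm u)^2"
    using S1 S0 by (metis power_mono power_mult_distrib)
  also have "\<dots> \<le> (norm h)^2 * (K * S)" by (intro mult_left_mono) (fact, simp)
  finally have "S * S \<le> ((norm h)^2 * K) * S" by (simp add: power2_eq_square mult_ac)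
  then have "S \<le> (norm h)^2 * K \<or> S = 0" using S0
    by (cases "S = 0") (auto simp: mult_le_cancel_right)
  then show ?thesis using K by (auto simp: S_def[symmetric] c_def[symmetric] mult.commute)
qed

lemma summable_by_bound:
  fixes f :: "'b \<Rightarrow> 'a::banach" and \<phi> :: "'b \<Rightarrow> real"
  assumes phi: "\<phi> summable_on A" and nn: "\<And>x. 0 \<le> \<phi> x" and K: "0 \<le> K"
    and bnd: "\<And>F. finite F \<Longrightarrow> F \<subseteq> A \<Longrightarrow> (norm (sum f F))^2 \<le> K * sum \<phi> F"
  shows "f summable_on A"
proof -
  from phi obtain L where lim: \<open>(sum \<phi> \<longlongrightarrow> L) (finite_subsets_at_top A)\<close>
    unfolding has_sum_def summable_on_def by blast
  have \<open>\<exists>P. eventually P (finite_subsets_at_top A) \<and>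
              (\<forall>F F'. P F \<and> P F' \<longrightarrow> dist (sum f F) (sum f F') < e)\<close> if epos: \<open>e>0\<close> for e
  proof -
    define d P where \<open>d = e^2/(16*(K+1))\<close> and \<open>P F \<longleftrightarrow> finite F \<and> F \<subseteq> A \<and> dist (sum \<phi> F) L < d\<close> for F
    then have \<open>d > 0\<close>
      using K that by (simp add: d_def)
    have ev_P: \<open>eventually P (finite_subsets_at_top A)\<close>
      using lim
      by (auto simp add: P_def[abs_def] \<open>0 < d\<close> eventually_conj_iff eventually_finite_subsets_at_top_weakI tendsto_iff)
    moreover have \<open>dist (sum f F1) (sum f F2) < e\<close> if \<open>P F1\<close> and \<open>P F2\<close> for F1 F2
    proof -
      from ev_P
      obtain F' where \<open>finite F'\<close> and \<open>F' \<subseteq> A\<close> and P_sup_F': \<open>finite F \<and> F \<supseteq> F' \<and> F \<subseteq> A \<Longrightarrow> P F\<close> for F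
        by atomize_elim (simp add: eventually_finite_subsets_at_top)
      define F where \<open>F = F' \<union> F1 \<union> F2\<close>
      have \<open>finite F\<close> and \<open>F \<subseteq> A\<close>
        using F_def P_def[abs_def] that \<open>finite F'\<close> \<open>F' \<subseteq> A\<close> by auto
      have dist_F: \<open>dist (sum \<phi> F) L < d\<close>
        by (metis F_def \<open>F \<subseteq> A\<close> P_def P_sup_F' \<open>finite F\<close> le_supE order_refl)
      have dist_F_subset: \<open>dist (sum f F) (sum f F') < e/2\<close> if F': \<open>F' \<subseteq> F\<close> \<open>P F'\<close> for F'
      proof -
        have fin: "finite (F - F')" using \<open>finite F\<close> by simp
        have \<open>dist (sum f F) (sum f F') = norm (sum f (F-F'))\<close>
          unfolding dist_norm using \<open>finite F\<close> F' by (subst sum_diff) auto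
        moreover have "(norm (sum f (F-F')))^2 \<le> K * sum \<phi> (F - F')"
          using bnd[OF fin] \<open>F \<subseteq> A\<close> by auto
        moreover have "sum \<phi> (F - F') = sum \<phi> F - sum \<phi> F'"
          using \<open>finite F\<close> F' by (subst sum_diff) auto
        moreover have "sum \<phi> F - sum \<phi> F' < 2 * d"
          using dist_F F' unfolding P_def dist_norm real_norm_def by linarith
        moreover have "K * (2 * d) < (e/2)^2"
        proof -
          have "K * (2 * d) = e^2 * (K / (8 * (K+1)))" using K by (simp add: d_def field_simps)
          also have "\<dots> \<le> e^2 * (1/8)" using K by (intro mult_left_mono) (auto simp: field_simps)
          also have "\<dots> < (e/2)^2" using epos by (simp add: power_divide)
          finally show ?thesis .
        qed
        ultimately have "(norm (sum f (F-F')))^2 < (e/2)^2"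
          by (smt (verit, best) K mult_left_mono)
        then show ?thesis using \<open>dist (sum f F) (sum f F') = _\<close> epos
          by (metis power_less_imp_less_base less_imp_le half_gt_zero)
      qed
      have \<open>dist (sum f F1) (sum f F2) \<le> dist (sum f F) (sum f F1) + dist (sum f F) (sum f F2)\<close>
        by (rule dist_triangle3)
      also have \<open>\<dots> < e/2 + e/2\<close>
        by (intro add_strict_mono dist_F_subset that) (auto simp: F_def)
      finally show \<open>dist (sum f F1) (sum f F2) < e\<close> by simp
    qed
    ultimately show ?thesis by blast
  qed
  then have \<open>cauchy_filter (filtermap (sum f) (finite_subsets_at_top A))\<close>
    by (simp add: cauchy_filter_metric_filtermap)
  moreover have "complete (UNIV::'a set)"
    by (meson Cauchy_convergent UNIV_I complete_def convergent_def)
  ultimately obtain L' where \<open>(sum f \<longlongrightarrow> L') (finite_subsets_at_top A)\<close>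
    using complete_uniform[where S=UNIV] by (force simp add: filterlim_def)
  then show ?thesis
    using summable_on_def has_sum_def by blast
qed

lemma bounded_linear_cinner_left: "bounded_linear (\<lambda>v::'a::complex_hilbert. cinner v u)"
  by (rule bounded_linear_intro[where K="norm u"])
     (auto simp: cinner_add_left cinner_scaleR_left scaleR_conv_of_real cauchy_schwarz)

lemma frame_boundsD:
  assumes "frame_bounds h A B"
  shows "0 < A" "A \<le> B" "(\<lambda>n. (cmod (cinner f (h n)))\<^sup>2) summable_on UNIV"
    "A * (norm f)\<^sup>2 \<le> (\<Sum>\<^sub>\<infinity>n. (cmod (cinner f (h n)))\<^sup>2)"
    "(\<Sum>\<^sub>\<infinity>n. (cmod (cinner f (h n)))\<^sup>2) \<le> B * (norm f)\<^sup>2"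
  using assms unfolding frame_bounds_def by auto

locale gframe =
  fixes g :: "int \<Rightarrow> 'a::complex_hilbert" and K Ag Bg :: real
  assumes row: "\<And>x F. finite F \<Longrightarrow> (\<Sum>y\<in>F. cmod (cinner (g x) (g y))) \<le> K"
    and col: "\<And>y F. finite F \<Longrightarrow> (\<Sum>x\<in>F. cmod (cinner (g x) (g y))) \<le> K"
    and K0: "0 < K"
    and fb: "frame_bounds g Ag Bg"
begin

abbreviation "S \<equiv> frame_op g"

definition Q :: "'a \<Rightarrow> real" where "Q w = (\<Sum>\<^sub>\<infinity>x. (cmod (cinner w (g x)))\<^sup>2)"

lemma coef_summable: "(\<lambda>x. (cmod (cinner w (g x)))\<^sup>2) summable_on UNIV"
  using frame_boundsD(3)[OF fb] .

lemma bessel: "finite F \<Longrightarrow> (\<Sum>x\<in>F. (cmod (cinner h (g x)))^2) \<le> K * (norm h)^2"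
  by (rule bessel_bound[OF row col]) (use K0 in auto)

lemma Q_le: "Q w \<le> K * (norm w)^2"
  unfolding Q_def by (rule infsum_le_finite_sums[OF coef_summable bessel]) auto

lemma Q_ge: "Ag * (norm w)^2 \<le> Q w"
  unfolding Q_def using frame_boundsD(4)[OF fb] .

lemma Ag_pos: "0 < Ag" using frame_boundsD(1)[OF fb] .

lemma S_has_sum: "((\<lambda>x. scaleC (cinner w (g x)) (g x)) has_sum S w) UNIV"
proof -
  have "(\<lambda>x. scaleC (cinner w (g x)) (g x)) summable_on UNIV"
  proof (rule summable_by_bound[OF coef_summable _ less_imp_le[OF K0]])
    fix F :: "int set" assume fin: "finite F"
    show "(norm (\<Sum>x\<in>F. scaleC (cinner w (g x)) (g x)))\<^sup>2 \<le> K * (\<Sum>x\<in>F. (cmod (cinner w (g x)))\<^sup>2)"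
      by (rule gram_bound[where g=g and K=K]) (use row col fin in auto)
  qed simp
  then show ?thesis unfolding frame_op_def by (rule has_sum_infsum)
qed

lemma S_inner: "((\<lambda>x. cinner w (g x) * cinner (g x) u) has_sum cinner (S w) u) UNIV"
  using has_sum_bounded_linear[OF bounded_linear_cinner_left[of u] S_has_sum[of w]]
  by (simp add: cinner_scaleC_left)

lemma S_add: "S (a + b) = S a + S b"
proof -
  have "((\<lambda>x. scaleC (cinner a (g x)) (g x) + scaleC (cinner b (g x)) (g x)) has_sum (S a + S b)) UNIV"
    by (intro has_sum_add S_has_sum)
  then have "((\<lambda>x. scaleC (cinner (a + b) (g x)) (g x)) has_sum (S a + S b)) UNIV"
    by (simp add: cinner_add_left scaleC_add_left)
  then show ?thesis using S_has_sum[of "a+b"] by (rule has_sum_unique[rotated])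
qed

lemma S_diff: "S (a - b) = S a - S b"
  using S_add[of "a - b" b] by (simp add: algebra_simps)

lemma S_scaleR: "S (r *\<^sub>R a) = r *\<^sub>R S a"
proof -
  have "((\<lambda>x. r *\<^sub>R scaleC (cinner a (g x)) (g x)) has_sum (r *\<^sub>R S a)) UNIV"
    by (intro has_sum_scaleR S_has_sum)
  then have "((\<lambda>x. scaleC (cinner (r *\<^sub>R a) (g x)) (g x)) has_sum (r *\<^sub>R S a)) UNIV"
    by (simp only: scaleR_scaleC cinner_scaleC_left scaleC_scaleC)
  then show ?thesis using S_has_sum[of "r *\<^sub>R a"] by (rule has_sum_unique[rotated])
qed

lemma S_selfadj: "cinner (S w) u = cinner w (S u)"
proof -
  have 1: "((\<lambda>x. cnj (cinner u (g x) * cinner (g x) w)) has_sum cnj (cinner (S u) w)) UNIV"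
    using S_inner[of u w] by (simp only: has_sum_cnj_iff)
  have 2: "(\<lambda>x. cnj (cinner u (g x) * cinner (g x) w)) = (\<lambda>x. cinner w (g x) * cinner (g x) u)"
    by (rule ext) (simp add: cinner_commute[of "g x" u for x] cinner_commute[of w "g x" for x] mult.commute)
  have 3: "cnj (cinner (S u) w) = cinner w (S u)" by (simp add: cinner_commute[of w "S u"])
  have "((\<lambda>x. cinner w (g x) * cinner (g x) u) has_sum cinner w (S u)) UNIV"
    using 1 unfolding 2 3 .
  then show ?thesis using S_inner[of w u] by (rule has_sum_unique[rotated])
qed

lemma S_quad: "Re (cinner (S w) w) = Q w"
proof -
  have "((\<lambda>x. Re (cinner w (g x) * cinner (g x) w)) has_sum Re (cinner (S w) w)) UNIV"
    using has_sum_Re[OF S_inner[of w w]] by simp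
  moreover have "\<And>x. Re (cinner w (g x) * cinner (g x) w) = (cmod (cinner w (g x)))\<^sup>2"
  proof -
    fix x
    have "cinner w (g x) * cinner (g x) w = of_real ((cmod (cinner w (g x)))\<^sup>2)"
      by (simp only: complex_norm_square cinner_commute[of "g x" w])
    then show "Re (cinner w (g x) * cinner (g x) w) = (cmod (cinner w (g x)))\<^sup>2" by simp
  qed
  ultimately have "((\<lambda>x. (cmod (cinner w (g x)))\<^sup>2) has_sum Re (cinner (S w) w)) UNIV" by simp
  then show ?thesis unfolding Q_def by (simp add: infsumI)
qed

end

context gframe begin

definition T :: "'a \<Rightarrow> 'a" where "T w = w - (1/K) *\<^sub>R S w"
definition c1 :: real where "c1 = max 0 (1 - Ag/K)"

lemma c1_bounds: "0 \<le> c1" "c1 < 1"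
  using Ag_pos K0 by (auto simp: c1_def)

lemma T_diff: "T (a - b) = T a - T b"
  by (simp add: T_def S_diff scaleR_diff_right)

lemma T_scaleR: "T (r *\<^sub>R a) = r *\<^sub>R T a"
  by (simp add: T_def S_scaleR scaleR_diff_right)

lemma T_selfadj: "cinner (T a) b = cinner a (T b)"
  by (simp add: T_def cinner_diff_left cinner_diff_right cinner_scaleR_left cinner_scaleR_right S_selfadj)

lemma T_quad: "Re (cinner (T w) w) = (norm w)^2 - Q w / K"
proof -
  have "cinner (T w) w = cinner w w - of_real (1/K) * cinner (S w) w"
    by (simp add: T_def cinner_diff_left cinner_scaleR_left)
  then show ?thesis using S_quad[of w] by (simp add: Re_cinner_self)
qed

lemma T_pos: "0 \<le> Re (cinner (T w) w)"
  using Q_le[of w] K0 by (simp add: T_quad field_simps)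

lemma T_upper: "Re (cinner (T w) w) \<le> c1 * (norm w)^2"
proof -
  have "Re (cinner (T w) w) \<le> (norm w)^2 - Ag * (norm w)^2 / K"
    unfolding T_quad using Q_ge[of w] K0 by (simp add: divide_right_mono)
  also have "\<dots> = (1 - Ag/K) * (norm w)^2" by (simp add: field_simps)
  also have "\<dots> \<le> c1 * (norm w)^2" by (intro mult_right_mono) (auto simp: c1_def)
  finally show ?thesis .
qed

lemma norm_T: "norm (T u) \<le> c1 * norm u"
proof -
  define v where "v = T u"
  define a where "a = Re (cinner (T u) u)"
  define b where "b = (norm v)^2"
  define c where "c = Re (cinner (T v) v)"
  have "b^2 \<le> a * c"
  proof (rule quad_lemma)
    fix r :: real
    have "0 \<le> Re (cinner (T (u - r *\<^sub>R v)) (u - r *\<^sub>R v))" by (rule T_pos)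
    also have "T (u - r *\<^sub>R v) = v - r *\<^sub>R T v" by (simp add: T_diff T_scaleR v_def)
    also have "Re (cinner (v - r *\<^sub>R T v) (u - r *\<^sub>R v)) = a - 2 * r * b + r^2 * c"
    proof -
      have e1: "cinner (T v) u = cinner v v" by (simp add: T_selfadj v_def)
      have "cinner (v - r *\<^sub>R T v) (u - r *\<^sub>R v) =
          cinner v u - of_real r * cinner v v - of_real r * cinner (T v) u + of_real r * of_real r * cinner (T v) v"
        by (simp add: cinner_diff_left cinner_diff_right cinner_scaleR_left cinner_scaleR_right algebra_simps)
      then show ?thesis unfolding e1 by (simp add: a_def b_def c_def v_def Re_cinner_self power2_eq_square)
    qed
    finally show "0 \<le> a - 2 * r * b + r^2 * c" .
  qed (simp add: c_def T_pos)
  moreover have "c \<le> c1 * b" unfolding c_def b_def by (rule T_upper)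
  moreover have "a \<le> c1 * (norm u)^2" unfolding a_def by (rule T_upper)
  moreover have "0 \<le> a" unfolding a_def by (rule T_pos)
  moreover have "0 \<le> b" by (simp add: b_def)
  ultimately have "b^2 \<le> (c1 * (norm u)^2) * (c1 * b)"
  proof -
    assume h: "b^2 \<le> a * c" "c \<le> c1 * b" "a \<le> c1 * (norm u)^2" "0 \<le> a" "0 \<le> b"
    have "a * c \<le> a * (c1 * b)" using h by (intro mult_left_mono) auto
    also have "\<dots> \<le> (c1 * (norm u)^2) * (c1 * b)" using h c1_bounds by (intro mult_right_mono) auto
    finally show ?thesis using h(1) by linarith
  qed
  then have "b \<le> c1^2 * (norm u)^2 \<or> b = 0" using \<open>0 \<le> b\<close>
    by (cases "b = 0") (auto simp: power2_eq_square mult_ac)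
  then have "b \<le> (c1 * norm u)^2" by (auto simp: power_mult_distrib)
  then show ?thesis using c1_bounds unfolding b_def v_def
    by (meson norm_ge_zero power2_le_imp_le mult_nonneg_nonneg)
qed

lemma S_surj: "surj S"
proof -
  have "\<exists>w. S w = y" for y
  proof -
    define \<Phi> where "\<Phi> w = (1/K) *\<^sub>R y + T w" for w
    have "\<exists>!w. \<Phi> w = w"
    proof (rule banach_fix_type[OF c1_bounds])
      show "\<forall>a b. dist (\<Phi> a) (\<Phi> b) \<le> c1 * dist a b"
        by (simp add: \<Phi>_def dist_norm norm_T flip: T_diff)
    qed
    then obtain w where "\<Phi> w = w" by blast
    then have "(1/K) *\<^sub>R y = (1/K) *\<^sub>R S w" by (simp add: \<Phi>_def T_def algebra_simps)
    then have "S w = y" using K0 by simp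
    then show ?thesis ..
  qed
  then show ?thesis by (metis surj_def)
qed

lemma S_inj: "inj S"
proof (rule injI)
  fix a b assume "S a = S b"
  then have "S (a - b) = 0" by (simp add: S_diff)
  then have "Q (a - b) = 0" using S_quad[of "a - b"] by simp
  then have "Ag * (norm (a - b))^2 \<le> 0" using Q_ge[of "a - b"] by simp
  then show "a = b" using Ag_pos by (simp add: mult_le_0_iff)
qed

lemma dual_expansion:
  "((\<lambda>x. cinner v (canonical_dual g x) * cinner (g x) h) has_sum cinner v h) UNIV"
proof -
  define p where "p = inv S v"
  have Sp: "S p = v" unfolding p_def using S_surj by (simp add: surj_f_inv_f)
  have "cinner v (canonical_dual g x) = cinner p (g x)" for x
  proof -
    have "cinner v (canonical_dual g x) = cinner (S p) (inv S (g x))" by (simp add: Sp canonical_dual_def)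
    also have "\<dots> = cinner p (S (inv S (g x)))" by (rule S_selfadj)
    also have "\<dots> = cinner p (g x)" using S_surj by (simp add: surj_f_inv_f)
    finally show ?thesis .
  qed
  then show ?thesis using S_inner[of p h] by (simp add: Sp)
qed

end

lemma norm_has_sum_le_finite:
  fixes f :: "'b \<Rightarrow> 'a::banach"
  assumes "(f has_sum s) A" and "\<And>F. finite F \<Longrightarrow> F \<subseteq> A \<Longrightarrow> (\<Sum>x\<in>F. norm (f x)) \<le> R"
  shows "norm s \<le> R"
proof -
  have sm: "(\<lambda>x. norm (f x)) summable_on A"
    by (rule nonneg_bdd_above_summable_on) (use assms(2) in \<open>auto intro!: bdd_aboveI\<close>)
  have "norm s \<le> infsum (\<lambda>x. norm (f x)) A"
    by (rule norm_infsum_le[OF assms(1) has_sum_infsum[OF sm]]) simp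
  also have "\<dots> \<le> R" by (rule infsum_le_finite_sums[OF sm assms(2)])
  finally show ?thesis .
qed

lemma amgm_lam:
  fixes a q lam :: real assumes "0 < lam"
  shows "a * q \<le> (lam * a^2 + q^2 / lam) / 2"
proof -
  have "0 \<le> (lam * a - q)^2" by simp
  then have "2 * lam * (a * q) \<le> lam^2 * a^2 + q^2" by (simp add: power2_eq_square algebra_simps)
  then show ?thesis using assms by (simp add: field_simps power2_eq_square)
qed

lemma double_bound:
  fixes m :: "int \<Rightarrow> int \<Rightarrow> real" and \<alpha> \<beta> :: "int \<Rightarrow> real"
  assumes N: "finite N" and X: "finite X" and m0: "\<And>n x. 0 \<le> m n x"
    and rows: "\<And>n. (\<Sum>x\<in>X. m n x) \<le> \<epsilon>" and cols: "\<And>x. (\<Sum>n\<in>N. m n x) \<le> \<epsilon>"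
    and lam: "0 < lam"
  shows "(\<Sum>x\<in>X. \<Sum>n\<in>N. \<alpha> n * m n x * \<beta> x) \<le> \<epsilon>/2 * (lam * (\<Sum>n\<in>N. (\<alpha> n)^2) + (\<Sum>x\<in>X. (\<beta> x)^2) / lam)"
proof -
  have "(\<Sum>x\<in>X. \<Sum>n\<in>N. \<alpha> n * m n x * \<beta> x) \<le> (\<Sum>x\<in>X. \<Sum>n\<in>N. m n x * ((lam * (\<alpha> n)^2 + (\<beta> x)^2 / lam) / 2))"
  proof (intro sum_mono)
    fix x n
    have "\<alpha> n * \<beta> x \<le> (lam * (\<alpha> n)^2 + (\<beta> x)^2 / lam) / 2" by (rule amgm_lam[OF lam])
    then show "\<alpha> n * m n x * \<beta> x \<le> m n x * ((lam * (\<alpha> n)^2 + (\<beta> x)^2 / lam) / 2)"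
      using m0[of n x] by (metis mult.commute mult.left_commute mult_left_mono)
  qed
  also have "\<dots> = lam/2 * (\<Sum>n\<in>N. (\<alpha> n)^2 * (\<Sum>x\<in>X. m n x)) + 1/(2*lam) * (\<Sum>x\<in>X. (\<beta> x)^2 * (\<Sum>n\<in>N. m n x))"
  proof -
    have "(\<Sum>x\<in>X. \<Sum>n\<in>N. m n x * ((lam * (\<alpha> n)^2 + (\<beta> x)^2 / lam) / 2))
        = (\<Sum>x\<in>X. \<Sum>n\<in>N. lam/2 * ((\<alpha> n)^2 * m n x)) + (\<Sum>x\<in>X. \<Sum>n\<in>N. 1/(2*lam) * ((\<beta> x)^2 * m n x))"
      by (simp only: sum.distrib[symmetric]) (rule sum.cong[OF refl], rule sum.cong[OF refl], simp add: field_simps)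
    also have "(\<Sum>x\<in>X. \<Sum>n\<in>N. lam/2 * ((\<alpha> n)^2 * m n x)) = (\<Sum>n\<in>N. \<Sum>x\<in>X. lam/2 * ((\<alpha> n)^2 * m n x))"
      by (rule sum.swap)
    finally show ?thesis by (simp only: sum_distrib_left)
  qed
  also have "\<dots> \<le> lam/2 * (\<Sum>n\<in>N. (\<alpha> n)^2 * \<epsilon>) + 1/(2*lam) * (\<Sum>x\<in>X. (\<beta> x)^2 * \<epsilon>)"
    using lam by (intro add_mono mult_left_mono sum_mono rows cols) auto
  also have "\<dots> = \<epsilon>/2 * (lam * (\<Sum>n\<in>N. (\<alpha> n)^2) + (\<Sum>x\<in>X. (\<beta> x)^2) / lam)"
    using lam by (simp add: sum_distrib_left[symmetric] sum_distrib_right[symmetric] field_simps mult.commute[of _ \<epsilon>])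
  finally show ?thesis .
qed

lemma optimize_lam:
  fixes P B0 \<epsilon> :: real
  assumes P0: "0 \<le> P" and B0: "0 \<le> B0" and e0: "0 \<le> \<epsilon>"
    and H: "\<And>lam. 0 < lam \<Longrightarrow> P \<le> \<epsilon>/2 * (lam * P + B0 / lam)"
  shows "P \<le> \<epsilon>^2 * B0"
proof (cases "P = 0")
  case True then show ?thesis using B0 by simp
next
  case False
  then have Pp: "0 < P" using P0 by simp
  show ?thesis
  proof (cases "B0 = 0")
    case True
    have "P \<le> \<epsilon>/2 * ((1/(\<epsilon>+1)) * P + B0 / (1/(\<epsilon>+1)))" using H[of "1/(\<epsilon>+1)"] e0 by simp
    also have "\<dots> = (\<epsilon>/(2*(\<epsilon>+1))) * P" using True e0 by (simp add: field_simps)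
    also have "\<dots> < 1 * P" using Pp e0 by (intro mult_strict_right_mono) (auto simp: field_simps)
    finally show ?thesis by simp
  next
    case False
    then have Bp: "0 < B0" using B0 by simp
    define s where "s = sqrt (B0 * P)"
    have sp: "0 < s" using Bp Pp by (simp add: s_def)
    have s2: "s^2 = B0 * P" using Bp Pp by (simp add: s_def)
    have "P \<le> \<epsilon>/2 * ((s/P) * P + B0 / (s/P))" using H[of "s/P"] sp Pp by simp
    also have "(s/P) * P = s" using Pp by simp
    also have "B0 / (s/P) = s" using sp Pp s2 by (simp add: field_simps power2_eq_square)
    finally have "P \<le> \<epsilon> * s" by simp
    then have "P^2 \<le> (\<epsilon> * s)^2" using P0 by (simp add: power_mono)
    also have "\<dots> = (\<epsilon>^2 * B0) * P" by (simp add: power_mult_distrib s2 mult_ac)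
    finally have "P * P \<le> (\<epsilon>^2 * B0) * P" by (simp add: power2_eq_square)
    then show ?thesis using Pp by simp
  qed
qed

context gframe begin

lemma pert_bound:
  fixes v :: "int \<Rightarrow> 'a"
  assumes rowM: "\<And>n F. finite F \<Longrightarrow> (\<Sum>x\<in>F. cmod (cinner (v n) (canonical_dual g x))) \<le> \<epsilon>"
    and colM: "\<And>x F. finite F \<Longrightarrow> (\<Sum>n\<in>F. cmod (cinner (v n) (canonical_dual g x))) \<le> \<epsilon>"
    and e0: "0 \<le> \<epsilon>" and N: "finite N"
  shows "(\<Sum>n\<in>N. (cmod (cinner h (v n)))^2) \<le> \<epsilon>^2 * (K * (norm h)^2)"
proof -
  define a where "a n = cinner h (v n)" for n
  define P where "P = (\<Sum>n\<in>N. (cmod (a n))^2)"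
  define w where "w = (\<Sum>n\<in>N. scaleC (a n) (v n))"
  define m where "m n x = cmod (cinner (v n) (canonical_dual g x))" for n x
  have P0: "0 \<le> P" by (simp add: P_def sum_nonneg)
  have wh: "cinner w h = of_real P"
  proof -
    have "cinner w h = (\<Sum>n\<in>N. a n * cnj (a n))"
      by (simp add: w_def cinner_sum_left cinner_scaleC_left a_def cinner_commute[of "v n" h for n])
    also have "\<dots> = (\<Sum>n\<in>N. of_real ((cmod (a n))^2))"
      by (rule sum.cong) (simp_all only: complex_norm_square)
    also have "\<dots> = of_real P" by (simp only: P_def of_real_sum)
    finally show ?thesis .
  qed
  have pw: "cinner w (canonical_dual g x) = (\<Sum>n\<in>N. a n * cinner (v n) (canonical_dual g x))" for x
    by (simp add: w_def cinner_sum_left cinner_scaleC_left)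
  have key: "P \<le> \<epsilon>/2 * (lam * P + (K * (norm h)^2) / lam)" if lam: "0 < lam" for lam
  proof -
    have "cmod (cinner w h) \<le> \<epsilon>/2 * (lam * P + (K * (norm h)^2) / lam)"
    proof (rule norm_has_sum_le_finite[OF dual_expansion])
      fix X :: "int set" assume X: "finite X"
      have "(\<Sum>x\<in>X. cmod (cinner w (canonical_dual g x) * cinner (g x) h))
          \<le> (\<Sum>x\<in>X. \<Sum>n\<in>N. cmod (a n) * m n x * cmod (cinner h (g x)))"
      proof (rule sum_mono)
        fix x
        have "cmod (cinner w (canonical_dual g x) * cinner (g x) h) = cmod (cinner w (canonical_dual g x)) * cmod (cinner h (g x))"
          by (simp add: norm_mult cinner_commute[of "g x" h])
        also have "\<dots> \<le> (\<Sum>n\<in>N. cmod (a n) * m n x) * cmod (cinner h (g x))"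
          unfolding pw m_def
          by (intro mult_right_mono order.trans[OF norm_sum]) (auto simp: norm_mult)
        also have "\<dots> = (\<Sum>n\<in>N. cmod (a n) * m n x * cmod (cinner h (g x)))"
          by (simp add: sum_distrib_right)
        finally show "cmod (cinner w (canonical_dual g x) * cinner (g x) h) \<le> \<dots>" .
      qed
      also have "\<dots> \<le> \<epsilon>/2 * (lam * (\<Sum>n\<in>N. (cmod (a n))^2) + (\<Sum>x\<in>X. (cmod (cinner h (g x)))^2) / lam)"
        by (rule double_bound[OF N X _ _ _ lam]) (auto simp: m_def rowM colM X N)
      also have "\<dots> \<le> \<epsilon>/2 * (lam * P + (K * (norm h)^2) / lam)"
        using e0 lam bessel[OF X, of h] unfolding P_def
        by (intro mult_left_mono add_left_mono divide_right_mono) auto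
      finally show "(\<Sum>x\<in>X. norm (cinner w (canonical_dual g x) * cinner (g x) h)) \<le> \<epsilon>/2 * (lam * P + (K * (norm h)^2) / lam)"
        by simp
    qed
    then show ?thesis using wh P0 by simp
  qed
  have "P \<le> \<epsilon>^2 * (K * (norm h)^2)"
    by (rule optimize_lam[OF P0 _ e0 key]) (use K0 in auto)
  then show ?thesis by (simp add: P_def a_def)
qed

end

lemma ennreal_finite_le_infsum:
  fixes f :: "'b \<Rightarrow> ennreal"
  assumes "finite F"
  shows "sum f F \<le> infsum f UNIV"
proof -
  have "infsum f UNIV = (SUP F\<in>{F. finite F \<and> F \<subseteq> UNIV}. sum f F)"
    by (rule nonneg_infsum_complete) simp
  then show ?thesis using assms by (auto intro!: SUP_upper)
qed

lemma schur_bounds: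
  assumes sn: "schur_norm 0 M \<le> ennreal c" and c: "0 \<le> c"
  shows "\<And>k F. finite F \<Longrightarrow> (\<Sum>l\<in>F. cmod (M k l)) \<le> c"
    and "\<And>l F. finite F \<Longrightarrow> (\<Sum>k\<in>F. cmod (M k l)) \<le> c"
proof -
  have vw: "vweight 0 x = 1" for x
  proof -
    have "1 + \<bar>real_of_int x\<bar> \<noteq> 0" by linarith
    then show ?thesis by (simp add: vweight_def)
  qed
  have sn': "max (SUP k. \<Sum>\<^sub>\<infinity>l. ennreal (cmod (M k l))) (SUP l. \<Sum>\<^sub>\<infinity>k. ennreal (cmod (M k l))) \<le> ennreal c"
    using sn by (simp add: schur_norm_def vw)
  fix k l :: int and F :: "int set" assume F: "finite F"
  have "ennreal (\<Sum>l\<in>F. cmod (M k l)) = (\<Sum>l\<in>F. ennreal (cmod (M k l)))" by simp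
  also have "\<dots> \<le> (\<Sum>\<^sub>\<infinity>l. ennreal (cmod (M k l)))" by (rule ennreal_finite_le_infsum[OF F])
  also have "\<dots> \<le> (SUP k. \<Sum>\<^sub>\<infinity>l. ennreal (cmod (M k l)))" by (rule SUP_upper) simp
  also have "\<dots> \<le> ennreal c" using sn' by simp
  finally show "(\<Sum>l\<in>F. cmod (M k l)) \<le> c" using c by simp
next
  have vw: "vweight 0 x = 1" for x
  proof -
    have "1 + \<bar>real_of_int x\<bar> \<noteq> 0" by linarith
    then show ?thesis by (simp add: vweight_def)
  qed
  have sn': "max (SUP k. \<Sum>\<^sub>\<infinity>l. ennreal (cmod (M k l))) (SUP l. \<Sum>\<^sub>\<infinity>k. ennreal (cmod (M k l))) \<le> ennreal c"
    using sn by (simp add: schur_norm_def vw)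
  fix l :: int and F :: "int set" assume F: "finite F"
  have "ennreal (\<Sum>k\<in>F. cmod (M k l)) = (\<Sum>k\<in>F. ennreal (cmod (M k l)))" by simp
  also have "\<dots> \<le> (\<Sum>\<^sub>\<infinity>k. ennreal (cmod (M k l)))" by (rule ennreal_finite_le_infsum[OF F])
  also have "\<dots> \<le> (SUP l. \<Sum>\<^sub>\<infinity>k. ennreal (cmod (M k l)))" by (rule SUP_upper) simp
  also have "\<dots> \<le> ennreal c" using sn' by simp
  finally show "(\<Sum>k\<in>F. cmod (M k l)) \<le> c" using c by simp
qed

lemma L2_sq: "finite F \<Longrightarrow> (L2_set f F)^2 = (\<Sum>n\<in>F. (f n)^2)"
  unfolding L2_set_def by (simp add: sum_nonneg)

lemma l2_perturb:
  fixes \<alpha> \<beta> \<gamma> :: "int \<Rightarrow> real"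
  assumes a0: "\<And>n. 0 \<le> \<alpha> n" and b0: "\<And>n. 0 \<le> \<beta> n" and c0: "\<And>n. 0 \<le> \<gamma> n"
    and sa: "(\<lambda>n. (\<alpha> n)^2) summable_on UNIV"
    and tri1: "\<And>n. \<gamma> n \<le> \<alpha> n + \<beta> n" and tri2: "\<And>n. \<alpha> n \<le> \<gamma> n + \<beta> n"
    and bE: "\<And>F. finite F \<Longrightarrow> (\<Sum>n\<in>F. (\<beta> n)^2) \<le> E^2" and E0: "0 \<le> E"
  shows "(\<lambda>n. (\<gamma> n)^2) summable_on UNIV"
    and "(\<Sum>\<^sub>\<infinity>n. (\<gamma> n)^2) \<le> (sqrt (\<Sum>\<^sub>\<infinity>n. (\<alpha> n)^2) + E)^2"
    and "sqrt (\<Sum>\<^sub>\<infinity>n. (\<alpha> n)^2) - E \<le> sqrt (\<Sum>\<^sub>\<infinity>n. (\<gamma> n)^2)"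
proof -
  define Fa where "Fa = (\<Sum>\<^sub>\<infinity>n. (\<alpha> n)^2)"
  have L2b: "L2_set \<beta> F \<le> E" if "finite F" for F
  proof -
    have "L2_set \<beta> F \<le> sqrt (E^2)" unfolding L2_set_def by (rule real_sqrt_le_mono[OF bE[OF that]])
    then show ?thesis using E0 by simp
  qed
  have L2a: "L2_set \<alpha> F \<le> sqrt Fa" if "finite F" for F
    unfolding L2_set_def Fa_def
    by (rule real_sqrt_le_mono, rule finite_sum_le_infsum[OF sa that]) auto
  have fin_up: "(\<Sum>n\<in>F. (\<gamma> n)^2) \<le> (sqrt Fa + E)^2" if F: "finite F" for F
  proof -
    have "L2_set \<gamma> F \<le> L2_set (\<lambda>n. \<alpha> n + \<beta> n) F" by (rule L2_set_mono) (use tri1 c0 in auto)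
    also have "\<dots> \<le> L2_set \<alpha> F + L2_set \<beta> F" by (rule L2_set_triangle_ineq)
    also have "\<dots> \<le> sqrt Fa + E" using L2a[OF F] L2b[OF F] by simp
    finally have "(L2_set \<gamma> F)^2 \<le> (sqrt Fa + E)^2" by (simp add: power_mono)
    then show ?thesis by (simp add: L2_sq[OF F])
  qed
  show sg: "(\<lambda>n. (\<gamma> n)^2) summable_on UNIV"
    by (rule nonneg_bdd_above_summable_on) (use fin_up in \<open>auto intro!: bdd_aboveI\<close>)
  show "(\<Sum>\<^sub>\<infinity>n. (\<gamma> n)^2) \<le> (sqrt (\<Sum>\<^sub>\<infinity>n. (\<alpha> n)^2) + E)^2"
    unfolding Fa_def[symmetric] by (rule infsum_le_finite_sums[OF sg fin_up]) auto
  define Gc where "Gc = (\<Sum>\<^sub>\<infinity>n. (\<gamma> n)^2)"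
  have L2c: "L2_set \<gamma> F \<le> sqrt Gc" if "finite F" for F
    unfolding L2_set_def Gc_def
    by (rule real_sqrt_le_mono, rule finite_sum_le_infsum[OF sg that]) auto
  have fin_lo: "(\<Sum>n\<in>F. (\<alpha> n)^2) \<le> (sqrt Gc + E)^2" if F: "finite F" for F
  proof -
    have "L2_set \<alpha> F \<le> L2_set (\<lambda>n. \<gamma> n + \<beta> n) F" by (rule L2_set_mono) (use tri2 a0 in auto)
    also have "\<dots> \<le> L2_set \<gamma> F + L2_set \<beta> F" by (rule L2_set_triangle_ineq)
    also have "\<dots> \<le> sqrt Gc + E" using L2c[OF F] L2b[OF F] by simp
    finally have "(L2_set \<alpha> F)^2 \<le> (sqrt Gc + E)^2" by (simp add: power_mono)
    then show ?thesis by (simp add: L2_sq[OF F])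
  qed
  have "Fa \<le> (sqrt Gc + E)^2"
    unfolding Fa_def by (rule infsum_le_finite_sums[OF sa fin_lo]) auto
  then have "sqrt Fa \<le> sqrt ((sqrt Gc + E)^2)" by (rule real_sqrt_le_mono)
  also have "\<dots> = sqrt Gc + E"
  proof -
    have "0 \<le> Gc" unfolding Gc_def by (rule infsum_nonneg) simp
    then show ?thesis using E0 by (simp add: abs_of_nonneg)
  qed
  finally have "sqrt Fa \<le> sqrt Gc + E" .
  then show "sqrt (\<Sum>\<^sub>\<infinity>n. (\<alpha> n)^2) - E \<le> sqrt (\<Sum>\<^sub>\<infinity>n. (\<gamma> n)^2)"
    unfolding Fa_def Gc_def by simp
qed

theorem mainTheorem2:
  fixes g f e :: "int \<Rightarrow> 'a::complex_hilbert"
    and s A B \<epsilon> :: real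
  assumes separable: "\<exists>D::'a set. countable D \<and> closure D = UNIV"
    and s_pos: "s > 0"
    and g_frame: "is_frame g"
    and g_loc: "self_localized s g"
    and f_frame: "frame_bounds f A B"
    and pert: "schur_norm 0 (gramian (\<lambda>n. e n - f n) (canonical_dual g)) \<le> ennreal \<epsilon>"
    and eps_pos: "0 < \<epsilon>"
    and eps_small: "\<epsilon> < inverse (sqrt (inverse A * enn2real (schur_norm 0 (gramian g g))))"
  shows "frame_bounds e
           (A * (1 - sqrt (inverse A * enn2real (schur_norm 0 (gramian g g))) * \<epsilon>)\<^sup>2)
           (B * (1 + sqrt (inverse B * enn2real (schur_norm 0 (gramian g g))) * \<epsilon>)\<^sup>2)"
proof -
  obtain Ag Bg where gfb: "frame_bounds g Ag Bg" using g_frame unfolding is_frame_def by blast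
  define K where "K = enn2real (schur_norm 0 (gramian g g))"
  have A0: "0 < A" and AB: "A \<le> B" using frame_boundsD[OF f_frame] by auto
  have B0: "0 < B" using A0 AB by simp
  have Kge: "0 \<le> K" by (simp add: K_def)
  have K0: "0 < K"
  proof (rule ccontr)
    assume "\<not> 0 < K"
    then have "K = 0" using Kge by simp
    then show False using eps_small eps_pos by (simp add: K_def)
  qed
  have Kfin: "schur_norm 0 (gramian g g) = ennreal K"
  proof -
    have "schur_norm 0 (gramian g g) \<noteq> top" using K0 by (auto simp: K_def)
    then show ?thesis unfolding K_def by (simp add: less_top)
  qed
  have grow: "\<And>x F. finite F \<Longrightarrow> (\<Sum>y\<in>F. cmod (cinner (g x) (g y))) \<le> K"
    using schur_bounds(1)[of "gramian g g" K] Kfin Kge by (simp add: gramian_def)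
  have gcol: "\<And>y F. finite F \<Longrightarrow> (\<Sum>x\<in>F. cmod (cinner (g x) (g y))) \<le> K"
    using schur_bounds(2)[of "gramian g g" K] Kfin Kge by (simp add: gramian_def)
  interpret G: gframe g K Ag Bg
    by unfold_locales (fact grow, fact gcol, fact K0, fact gfb)
  have prow: "\<And>n F. finite F \<Longrightarrow> (\<Sum>x\<in>F. cmod (cinner (e n - f n) (canonical_dual g x))) \<le> \<epsilon>"
    using schur_bounds(1)[OF pert] eps_pos by (simp add: gramian_def)
  have pcol: "\<And>x F. finite F \<Longrightarrow> (\<Sum>n\<in>F. cmod (cinner (e n - f n) (canonical_dual g x))) \<le> \<epsilon>"
    using schur_bounds(2)[OF pert] eps_pos by (simp add: gramian_def)
  have pb: "\<And>h N. finite N \<Longrightarrow> (\<Sum>n\<in>N. (cmod (cinner h (e n - f n)))^2) \<le> \<epsilon>^2 * (K * (norm h)^2)"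
    by (rule G.pert_bound[OF prow pcol]) (use eps_pos in auto)
  define t where "t = sqrt (inverse A * K)"
  define tB where "tB = sqrt (inverse B * K)"
  have t0: "0 < t" using A0 K0 by (simp add: t_def)
  have tB0: "0 < tB" using B0 K0 by (simp add: tB_def)
  have te: "t * \<epsilon> < 1"
  proof -
    have "\<epsilon> < inverse t" using eps_small by (simp add: t_def K_def)
    then show ?thesis using t0 by (simp add: field_simps)
  qed
  have sAt: "sqrt A * t = sqrt K"
  proof -
    have "sqrt A * t = sqrt (A * (inverse A * K))" by (simp only: t_def real_sqrt_mult)
    also have "\<dots> = sqrt K" using A0 by simp
    finally show ?thesis .
  qed
  have sBt: "sqrt B * tB = sqrt K"
  proof -
    have "sqrt B * tB = sqrt (B * (inverse B * K))" by (simp only: tB_def real_sqrt_mult)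
    also have "\<dots> = sqrt K" using B0 by simp
    finally show ?thesis .
  qed
  have main: "(\<lambda>n. (cmod (cinner h (e n)))\<^sup>2) summable_on UNIV \<and>
          A * (1 - t * \<epsilon>)\<^sup>2 * (norm h)\<^sup>2 \<le> (\<Sum>\<^sub>\<infinity>n. (cmod (cinner h (e n)))\<^sup>2) \<and>
          (\<Sum>\<^sub>\<infinity>n. (cmod (cinner h (e n)))\<^sup>2) \<le> B * (1 + tB * \<epsilon>)\<^sup>2 * (norm h)\<^sup>2" for h
  proof -
    define E where "E = \<epsilon> * sqrt K * norm h"
    have E0: "0 \<le> E" using eps_pos K0 by (simp add: E_def)
    have split: "cinner h (e n) = cinner h (f n) + cinner h (e n - f n)" for n
      by (simp add: cinner_diff_right)
    have tri1: "cmod (cinner h (e n)) \<le> cmod (cinner h (f n)) + cmod (cinner h (e n - f n))" for n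
      unfolding split by (rule norm_triangle_ineq)
    have tri2: "cmod (cinner h (f n)) \<le> cmod (cinner h (e n)) + cmod (cinner h (e n - f n))" for n
    proof -
      have "cinner h (f n) = cinner h (e n) - cinner h (e n - f n)" by (simp add: split)
      then show ?thesis by (metis norm_triangle_ineq4)
    qed
    have bE: "(\<Sum>n\<in>F. (cmod (cinner h (e n - f n)))^2) \<le> E^2" if "finite F" for F
      using pb[OF that, of h] K0 by (simp add: E_def power_mult_distrib)
    note L = l2_perturb[of "\<lambda>n. cmod (cinner h (f n))" "\<lambda>n. cmod (cinner h (e n - f n))" "\<lambda>n. cmod (cinner h (e n))",
        OF _ _ _ frame_boundsD(3)[OF f_frame] tri1 tri2 bE E0]
    define Fa where "Fa = (\<Sum>\<^sub>\<infinity>n. (cmod (cinner h (f n)))^2)"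
    have Fa_lo: "A * (norm h)^2 \<le> Fa" unfolding Fa_def by (rule frame_boundsD(4)[OF f_frame])
    have Fa_up: "Fa \<le> B * (norm h)^2" unfolding Fa_def by (rule frame_boundsD(5)[OF f_frame])
    have sFa_lo: "sqrt A * norm h \<le> sqrt Fa"
      using real_sqrt_le_mono[OF Fa_lo] A0 by (simp add: real_sqrt_mult)
    have sFa_up: "sqrt Fa \<le> sqrt B * norm h"
      using real_sqrt_le_mono[OF Fa_up] B0 by (simp add: real_sqrt_mult)
    have up: "(\<Sum>\<^sub>\<infinity>n. (cmod (cinner h (e n)))\<^sup>2) \<le> B * (1 + tB * \<epsilon>)\<^sup>2 * (norm h)\<^sup>2"
    proof -
      have "(\<Sum>\<^sub>\<infinity>n. (cmod (cinner h (e n)))\<^sup>2) \<le> (sqrt Fa + E)^2" using L(2) by (simp add: Fa_def)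
      also have "\<dots> \<le> (sqrt B * norm h + E)^2"
      proof -
        have "0 \<le> sqrt A * norm h" using A0 by simp
        then show ?thesis using sFa_up E0 sFa_lo by (intro power_mono) auto
      qed
      also have "sqrt B * norm h + E = sqrt B * (1 + tB * \<epsilon>) * norm h"
        by (simp add: E_def algebra_simps flip: sBt)
      also have "(sqrt B * (1 + tB * \<epsilon>) * norm h)^2 = B * (1 + tB * \<epsilon>)\<^sup>2 * (norm h)\<^sup>2"
        using B0 by (simp add: power_mult_distrib)
      finally show ?thesis .
    qed
    have lo: "A * (1 - t * \<epsilon>)\<^sup>2 * (norm h)\<^sup>2 \<le> (\<Sum>\<^sub>\<infinity>n. (cmod (cinner h (e n)))\<^sup>2)"
    proof -
      have eq: "sqrt A * (1 - t * \<epsilon>) * norm h = sqrt A * norm h - E"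
        by (simp add: E_def algebra_simps flip: sAt)
      have nn: "0 \<le> sqrt A * (1 - t * \<epsilon>) * norm h" using te A0 by simp
      have "sqrt A * (1 - t * \<epsilon>) * norm h \<le> sqrt Fa - E" unfolding eq using sFa_lo by simp
      also have "\<dots> \<le> sqrt (\<Sum>\<^sub>\<infinity>n. (cmod (cinner h (e n)))\<^sup>2)" using L(3) by (simp add: Fa_def)
      finally have "(sqrt A * (1 - t * \<epsilon>) * norm h)^2 \<le> (sqrt (\<Sum>\<^sub>\<infinity>n. (cmod (cinner h (e n)))\<^sup>2))^2"
        using nn by (intro power_mono) auto
      also have "\<dots> = (\<Sum>\<^sub>\<infinity>n. (cmod (cinner h (e n)))\<^sup>2)"
        by (simp add: infsum_nonneg)
      finally show ?thesis using A0 by (simp add: power_mult_distrib)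
    qed
    show ?thesis using L(1) up lo by simp
  qed
  have Apos: "0 < A * (1 - t * \<epsilon>)\<^sup>2" using A0 te by simp
  have AleB: "A * (1 - t * \<epsilon>)\<^sup>2 \<le> B * (1 + tB * \<epsilon>)\<^sup>2"
  proof -
    have "(1 - t * \<epsilon>)\<^sup>2 \<le> 1" using te t0 eps_pos
      by (simp add: power_le_one_iff abs_le_iff)
    then have "A * (1 - t * \<epsilon>)\<^sup>2 \<le> A" using A0 by (simp add: mult_le_cancel_left1)
    also have "A \<le> B" by (rule AB)
    also have "B \<le> B * (1 + tB * \<epsilon>)\<^sup>2"
    proof -
      have "1 \<le> (1 + tB * \<epsilon>)\<^sup>2" using tB0 eps_pos by (simp add: one_le_power)
      then show ?thesis using B0 by (simp add: mult_le_cancel_left1)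
    qed
    finally show ?thesis .
  qed
  show ?thesis
    unfolding frame_bounds_def t_def[symmetric, unfolded K_def] tB_def[symmetric, unfolded K_def]
    using Apos AleB main by auto
qed


end
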